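(* Let $\{\mu_n\}_{n\in\mathbb{N}}\cup\{\mu\}\subset\mathcal{M}(\mathbb{R})$ and $\alpha\in\mathbb{R}$. Suppose $\{\mu_n\}$ has no mass at any point of $\mathbb{R}$. Then the following are equivalent: (a) $F^{(\alpha)}_{\mu_n}(x)\to F^{(\alpha)}_\mu(x)$ at all continuity points $x$ of $\mu$; (b) $\mu_n\to\mu$ vaguely. Moreover, the equivalence also holds for $\alpha=-\infty$ (resp. $\alpha=+\infty$) under the additional assumption that $\{\mu_n\}$ has no mass at $-\infty$ (resp. $+\infty$), i.e. for every $\varepsilon>0$ there is $c\in\mathbb{R}$ with $\limsup_n|\mu_n|((-\infty,c))\le\varepsilon$ (resp. $\limsup_n|\mu_n|((c,\infty))\le\varepsilon$).
   Context: $\mathcal{M}(\mathbb{R})$ is the set of finite signed Borel measures on $\mathbb{R}$; $|\mu|$ denotes the variation measure. For $\alpha\in\mathbb{R}$, $F^{(\alpha)}_\mu(x)=\mu((\alpha,x])$ for $x\ge\alpha$ and $F^{(\alpha)}_\mu(x)=-\mu((x,\alpha])$ for $x<\alpha$; further $F^{(-\infty)}_\mu(x)=\mu((-\infty,x])$ and $F^{(+\infty)}_\mu(x)=-\mu((x,\infty))$. A point $x$ is a continuity point of $\mu$ if $\mu(\{x\})=0$. Vague convergence $\mu_n\to\mu$ means $\int f\,d\mu_n\to\int f\,d\mu$ for all continuous $f$ with compact support. $\{\mu_n\}$ has no mass at a point $x\in\mathbb{R}$ if for every $\varepsilon>0$ there is an open neighbourhood $N$ of $x$ with $\limsup_{n\to\infty}|\mu_n|(N)\le\varepsilon$.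 *)

theory Defs
  imports "HOL-Analysis.Analysis"
begin

text \<open>A finite signed Borel measure on the reals is represented as a pair (P, N) of
finite Borel measures, standing for the signed measure P - N.  Every finite signed
measure arises this way (Jordan decomposition), and every notion below depends only
on the difference P - N, not on the chosen pair.\<close>

type_synonym smeasure = "real measure \<times> real measure"

definition is_smeasure :: "smeasure \<Rightarrow> bool" where
  "is_smeasure \<mu> \<longleftrightarrow> sets (fst \<mu>) = sets borel \<and> sets (snd \<mu>) = sets borel
     \<and> finite_measure (fst \<mu>) \<and> finite_measure (snd \<mu>)"

definition sm_val :: "smeasure \<Rightarrow> real set \<Rightarrow> real" where
  "sm_val \<mu> A = measure (fst \<mu>) A - measure (snd \<mu>) A"

definition sm_var :: "smeasure \<Rightarrow> real set \<Rightarrow> real" where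
  "sm_var \<mu> A = Sup {(\<Sum>B\<in>\<P>. \<bar>sm_val \<mu> B\<bar>) | \<P>. finite \<P> \<and> \<P> \<subseteq> sets borel
        \<and> (\<forall>B\<in>\<P>. B \<subseteq> A) \<and> disjoint \<P>}"

definition sm_int :: "smeasure \<Rightarrow> (real \<Rightarrow> real) \<Rightarrow> real" where
  "sm_int \<mu> f = integral\<^sup>L (fst \<mu>) f - integral\<^sup>L (snd \<mu>) f"

definition sm_F :: "ereal \<Rightarrow> smeasure \<Rightarrow> real \<Rightarrow> real" where
  "sm_F \<alpha> \<mu> x = (case \<alpha> of
       ereal a \<Rightarrow> (if a \<le> x then sm_val \<mu> {a<..x} else - sm_val \<mu> {x<..a})
     | MInfty \<Rightarrow> sm_val \<mu> {..x}
     | PInfty \<Rightarrow> - sm_val \<mu> {x<..})"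

definition continuity_point :: "smeasure \<Rightarrow> real \<Rightarrow> bool" where
  "continuity_point \<mu> x \<longleftrightarrow> sm_val \<mu> {x} = 0"

definition vague_conv :: "(nat \<Rightarrow> smeasure) \<Rightarrow> smeasure \<Rightarrow> bool" where
  "vague_conv \<mu>s \<mu> \<longleftrightarrow> (\<forall>f :: real \<Rightarrow> real. continuous_on UNIV f
      \<and> (\<exists>K. compact K \<and> (\<forall>x. x \<notin> K \<longrightarrow> f x = 0))
      \<longrightarrow> (\<lambda>n. sm_int (\<mu>s n) f) \<longlonglongrightarrow> sm_int \<mu> f)"

definition no_mass_at :: "(nat \<Rightarrow> smeasure) \<Rightarrow> real \<Rightarrow> bool" where
  "no_mass_at \<mu>s x \<longleftrightarrow> (\<forall>\<epsilon>>0. \<exists>N. open N \<and> x \<in> N \<and>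
      limsup (\<lambda>n. ereal (sm_var (\<mu>s n) N)) \<le> ereal \<epsilon>)"

definition no_mass_at_minf :: "(nat \<Rightarrow> smeasure) \<Rightarrow> bool" where
  "no_mass_at_minf \<mu>s \<longleftrightarrow> (\<forall>\<epsilon>>0. \<exists>c. limsup (\<lambda>n. ereal (sm_var (\<mu>s n) {..<c})) \<le> ereal \<epsilon>)"

definition no_mass_at_pinf :: "(nat \<Rightarrow> smeasure) \<Rightarrow> bool" where
  "no_mass_at_pinf \<mu>s \<longleftrightarrow> (\<forall>\<epsilon>>0. \<exists>c. limsup (\<lambda>n. ereal (sm_var (\<mu>s n) {c<..})) \<le> ereal \<epsilon>)"

end

theory Submission
  imports Defs
begin
lemma smD:
  assumes "is_smeasure \<mu>"
  shows "finite_measure (fst \<mu>)" "finite_measure (snd \<mu>)"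
    "sets (fst \<mu>) = sets borel" "sets (snd \<mu>) = sets borel"
    "space (fst \<mu>) = UNIV" "space (snd \<mu>) = UNIV"
proof -
  have a: "sets (fst \<mu>) = sets borel" "sets (snd \<mu>) = sets borel"
    "finite_measure (fst \<mu>)" "finite_measure (snd \<mu>)"
    using assms unfolding is_smeasure_def by auto
  then show "finite_measure (fst \<mu>)" "finite_measure (snd \<mu>)"
    "sets (fst \<mu>) = sets borel" "sets (snd \<mu>) = sets borel" by auto
  show "space (fst \<mu>) = UNIV" using sets_eq_imp_space_eq[OF a(1)] by simp
  show "space (snd \<mu>) = UNIV" using sets_eq_imp_space_eq[OF a(2)] by simp
qed

lemma sm_integrable:
  fixes f :: "real \<Rightarrow> real" and B :: real
  assumes "is_smeasure \<mu>" "f \<in> borel_measurable borel" "\<And>x. \<bar>f x\<bar> \<le> B"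
  shows "integrable (fst \<mu>) f" "integrable (snd \<mu>) f"
proof -
  have m1: "f \<in> borel_measurable (fst \<mu>)" "f \<in> borel_measurable (snd \<mu>)"
    using assms(2) measurable_cong_sets[OF smD(3)[OF assms(1)] refl, of borel]
      measurable_cong_sets[OF smD(4)[OF assms(1)] refl, of borel] by auto
  show "integrable (fst \<mu>) f"
    by (rule finite_measure.integrable_const_bound[OF smD(1)[OF assms(1)], where B=B])
       (use assms m1 in auto)
  show "integrable (snd \<mu>) f"
    by (rule finite_measure.integrable_const_bound[OF smD(2)[OF assms(1)], where B=B])
       (use assms m1 in auto)
qed

lemma sm_int_diff:
  fixes f g :: "real \<Rightarrow> real" and B C :: real
  assumes "is_smeasure \<mu>" "f \<in> borel_measurable borel" "\<And>x. \<bar>f x\<bar> \<le> B"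
    "g \<in> borel_measurable borel" "\<And>x. \<bar>g x\<bar> \<le> C"
  shows "sm_int \<mu> (\<lambda>x. f x - g x) = sm_int \<mu> f - sm_int \<mu> g"
  using sm_integrable[OF assms(1-3)] sm_integrable[OF assms(1,4,5)]
  unfolding sm_int_def by simp

lemma sm_int_indicator:
  assumes "is_smeasure \<mu>"
  shows "sm_int \<mu> (indicator A) = sm_val \<mu> A"
  using smD[OF assms] unfolding sm_int_def sm_val_def by simp

lemma measure_disj_sum:
  assumes "finite_measure M" "sets M = sets borel" "finite P" "P \<subseteq> sets borel" "disjoint P"
  shows "(\<Sum>B\<in>P. measure M B) = measure M (\<Union>P)"
proof -
  have "measure M (\<Union>B\<in>P. id B) = (\<Sum>B\<in>P. measure M (id B))"
    by (rule finite_measure.finite_measure_finite_Union[OF assms(1)])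
       (use assms in \<open>auto simp: disjoint_family_on_def disjoint_def\<close>)
  then show ?thesis by simp
qed

lemma var_bdd:
  assumes "is_smeasure \<mu>"
  shows "bdd_above {(\<Sum>B\<in>\<P>. \<bar>sm_val \<mu> B\<bar>) | \<P>. finite \<P> \<and> \<P> \<subseteq> sets borel
        \<and> (\<forall>B\<in>\<P>. B \<subseteq> A) \<and> disjoint \<P>}"
proof (rule bdd_aboveI[where M="measure (fst \<mu>) UNIV + measure (snd \<mu>) UNIV"])
  fix x assume "x \<in> {(\<Sum>B\<in>\<P>. \<bar>sm_val \<mu> B\<bar>) | \<P>. finite \<P> \<and> \<P> \<subseteq> sets borel
        \<and> (\<forall>B\<in>\<P>. B \<subseteq> A) \<and> disjoint \<P>}"
  then obtain \<P> where x: "x = (\<Sum>B\<in>\<P>. \<bar>sm_val \<mu> B\<bar>)" and h: "finite \<P> \<and> \<P> \<subseteq> sets borel \<and> (\<forall>B\<in>\<P>. B \<subseteq> A) \<and> disjoint \<P>" by blast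
  note s = smD[OF assms]
  have "(\<Sum>B\<in>\<P>. \<bar>sm_val \<mu> B\<bar>) \<le> (\<Sum>B\<in>\<P>. measure (fst \<mu>) B + measure (snd \<mu>) B)"
  proof (rule sum_mono)
    fix B
    show "\<bar>sm_val \<mu> B\<bar> \<le> measure (fst \<mu>) B + measure (snd \<mu>) B"
      unfolding sm_val_def using measure_nonneg[of "fst \<mu>" B] measure_nonneg[of "snd \<mu>" B] by linarith
  qed
  also have "\<dots> = measure (fst \<mu>) (\<Union>\<P>) + measure (snd \<mu>) (\<Union>\<P>)"
    using measure_disj_sum[OF s(1) s(3)] measure_disj_sum[OF s(2) s(4)] h
    by (simp add: sum.distrib)
  also have "\<dots> \<le> measure (fst \<mu>) UNIV + measure (snd \<mu>) UNIV"
    using finite_measure.bounded_measure[OF s(1)] finite_measure.bounded_measure[OF s(2)] s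
    by (metis add_mono)
  finally show "x \<le> measure (fst \<mu>) UNIV + measure (snd \<mu>) UNIV" using x by simp
qed

lemma var_ge:
  assumes "is_smeasure \<mu>" "B \<in> sets borel" "B \<subseteq> A"
  shows "\<bar>sm_val \<mu> B\<bar> \<le> sm_var \<mu> A"
proof -
  have "\<bar>sm_val \<mu> B\<bar> = (\<Sum>C\<in>{B}. \<bar>sm_val \<mu> C\<bar>)" by simp
  also have "\<dots> \<le> sm_var \<mu> A"
    unfolding sm_var_def
    by (rule cSup_upper[OF _ var_bdd[OF assms(1)]]) (use assms in \<open>auto simp: disjoint_def intro!: exI[of _ "{B}"]\<close>)
  finally show ?thesis .
qed

lemma sm_val_split:
  assumes "is_smeasure \<mu>" "B \<in> sets borel" "X \<in> sets borel"
  shows "sm_val \<mu> B = sm_val \<mu> (B \<inter> X) + sm_val \<mu> (B - X)"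
proof -
  note s = smD[OF assms(1)]
  have e: "(B \<inter> X) \<union> (B - X) = B" by auto
  have "measure (fst \<mu>) ((B \<inter> X) \<union> (B - X)) = measure (fst \<mu>) (B \<inter> X) + measure (fst \<mu>) (B - X)"
    by (rule finite_measure.finite_measure_Union[OF s(1)]) (use assms s in auto)
  moreover have "measure (snd \<mu>) ((B \<inter> X) \<union> (B - X)) = measure (snd \<mu>) (B \<inter> X) + measure (snd \<mu>) (B - X)"
    by (rule finite_measure.finite_measure_Union[OF s(2)]) (use assms s in auto)
  ultimately have "measure (fst \<mu>) B = measure (fst \<mu>) (B \<inter> X) + measure (fst \<mu>) (B - X)"
       "measure (snd \<mu>) B = measure (snd \<mu>) (B \<inter> X) + measure (snd \<mu>) (B - X)"
    unfolding e by auto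
  then show ?thesis unfolding sm_val_def by simp
qed

lemma two_cover:
  assumes "is_smeasure \<mu>" "B \<in> sets borel" "X \<in> sets borel" "B \<subseteq> X \<union> Y"
  shows "\<bar>sm_val \<mu> B\<bar> \<le> sm_var \<mu> X + sm_var \<mu> Y"
proof -
  have "\<bar>sm_val \<mu> B\<bar> \<le> \<bar>sm_val \<mu> (B \<inter> X)\<bar> + \<bar>sm_val \<mu> (B - X)\<bar>"
    using sm_val_split[OF assms(1-3)] by linarith
  also have "\<dots> \<le> sm_var \<mu> X + sm_var \<mu> Y"
    by (intro add_mono var_ge[OF assms(1)]) (use assms in auto)
  finally show ?thesis .
qed

lemma fin_cover:
  assumes "is_smeasure \<mu>" "finite \<N>" "\<N> \<subseteq> sets borel"
  shows "B \<in> sets borel \<Longrightarrow> B \<subseteq> \<Union>\<N> \<Longrightarrow> \<bar>sm_val \<mu> B\<bar> \<le> (\<Sum>N\<in>\<N>. sm_var \<mu> N)"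
  using assms(2,3)
proof (induction \<N> arbitrary: B rule: finite_induct)
  case empty
  then show ?case by (simp add: sm_val_def)
next
  case (insert N \<N>)
  have "\<bar>sm_val \<mu> B\<bar> \<le> \<bar>sm_val \<mu> (B \<inter> N)\<bar> + \<bar>sm_val \<mu> (B - N)\<bar>"
    using sm_val_split[OF assms(1), of B N] insert by auto
  also have "\<dots> \<le> sm_var \<mu> N + (\<Sum>N\<in>\<N>. sm_var \<mu> N)"
    by (intro add_mono var_ge[OF assms(1)] insert.IH) (use insert in auto)
  finally show ?case using insert by simp
qed

lemma floor_count:
  fixes t :: real and k :: nat
  assumes "0 \<le> t" "t \<le> real k"
  shows "(\<Sum>j\<in>{1..k}. if real j \<le> t then 1 else 0::real) = real (nat \<lfloor>t\<rfloor>)"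
proof -
  have 1: "(\<Sum>j\<in>{1..k}. if real j \<le> t then 1 else 0::real) = (\<Sum>j\<in>{j\<in>{1..k}. real j \<le> t}. 1)"
    by (rule sum.inter_filter[symmetric]) simp
  have iff: "real j \<le> t \<longleftrightarrow> j \<le> nat \<lfloor>t\<rfloor>" for j :: nat
  proof -
    have "real j \<le> t \<longleftrightarrow> int j \<le> \<lfloor>t\<rfloor>" by (simp add: le_floor_iff)
    also have "\<dots> \<longleftrightarrow> j \<le> nat \<lfloor>t\<rfloor>" using assms(1) by (simp add: le_nat_iff)
    finally show ?thesis .
  qed
  have le: "nat \<lfloor>t\<rfloor> \<le> k"
  proof -
    have "\<lfloor>t\<rfloor> \<le> \<lfloor>real k\<rfloor>" by (rule floor_mono) (use assms in simp)
    then show ?thesis by (simp add: nat_le_iff)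
  qed
  have 2: "{j\<in>{1..k}. real j \<le> t} = {1..nat \<lfloor>t\<rfloor>}"
    unfolding iff using le by auto
  show ?thesis unfolding 1 2 by simp
qed

lemma int_abs_le:
  fixes f :: "'a \<Rightarrow> real"
  assumes "finite_measure M" "integrable M f" "\<And>x. \<bar>f x\<bar> \<le> c"
  shows "\<bar>integral\<^sup>L M f\<bar> \<le> c * measure M (space M)"
proof -
  have "\<bar>integral\<^sup>L M f\<bar> \<le> (\<integral>x. \<bar>f x\<bar> \<partial>M)" by (rule integral_abs_bound)
  also have "\<dots> \<le> (\<integral>x. c \<partial>M)"
    by (rule integral_mono[OF integrable_abs[OF assms(2)] finite_measure.integrable_const[OF assms(1)]])
       (use assms in auto)
  also have "\<dots> = c * measure M (space M)" by simp
  finally show ?thesis .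
qed

lemma layer_bound:
  fixes h :: "real \<Rightarrow> real"
  assumes \<mu>: "is_smeasure \<mu>" and hm: "h \<in> borel_measurable borel"
    and h01: "\<And>x. 0 \<le> h x \<and> h x \<le> 1" and h0: "\<And>x. x \<notin> A \<Longrightarrow> h x = 0"
    and V: "\<And>B. B \<in> sets borel \<Longrightarrow> B \<subseteq> A \<Longrightarrow> \<bar>sm_val \<mu> B\<bar> \<le> V"
  shows "\<bar>sm_int \<mu> h\<bar> \<le> V"
proof -
  note s = smD[OF \<mu>]
  define C where "C = measure (fst \<mu>) UNIV + measure (snd \<mu>) UNIV"
  have C0: "C \<ge> 0" unfolding C_def by simp
  have main: "\<bar>sm_int \<mu> h\<bar> \<le> V + C / real k" if k: "k > 0" for k :: nat
  proof -
    define S where "S j = {x. real j \<le> real k * h x}" for j :: nat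
    define sf where "sf x = (\<Sum>j\<in>{1..k}. indicator (S j) x) / real k" for x
    have [measurable]: "h \<in> borel_measurable borel" by (rule hm)
    have Sb: "S j \<in> sets borel" for j unfolding S_def by measurable
    have SA: "S j \<subseteq> A" if "j \<ge> 1" for j
    proof
      fix x assume "x \<in> S j"
      then have "real k * h x \<ge> 1" using that unfolding S_def by simp
      then have "h x \<noteq> 0" by auto
      then show "x \<in> A" using h0 by blast
    qed
    have sfm: "sf \<in> borel_measurable borel" unfolding sf_def using Sb by measurable
    have sfv: "sf x = real (nat \<lfloor>real k * h x\<rfloor>) / real k" for x
    proof -
      have "(\<Sum>j\<in>{1..k}. indicator (S j) x) = (\<Sum>j\<in>{1..k}. if real j \<le> real k * h x then 1 else 0::real)"
        by (rule sum.cong) (auto simp: S_def indicator_def)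
      also have "\<dots> = real (nat \<lfloor>real k * h x\<rfloor>)"
        by (rule floor_count) (use h01[of x] mult_left_mono[of "h x" 1 "real k"] in auto)
      finally show ?thesis unfolding sf_def by simp
    qed
    have sfb: "0 \<le> h x - sf x \<and> h x - sf x \<le> 1 / real k" for x
    proof -
      have t0: "0 \<le> real k * h x" using h01[of x] by simp
      have a: "real (nat \<lfloor>real k * h x\<rfloor>) \<le> real k * h x"
        using t0 by (simp add: of_nat_nat)
      have b: "real k * h x - 1 < real (nat \<lfloor>real k * h x\<rfloor>)"
        using t0 by (simp add: of_nat_nat)
      have "sf x \<le> (real k * h x) / real k" unfolding sfv using a by (intro divide_right_mono) auto
      also have "\<dots> = h x" using k by simp
      finally have "sf x \<le> h x" .
      moreover have "h x - 1 / real k \<le> sf x"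
      proof -
        have "h x - 1 / real k = (real k * h x - 1) / real k" using k by (simp add: field_simps)
        also have "\<dots> \<le> real (nat \<lfloor>real k * h x\<rfloor>) / real k" using b by (intro divide_right_mono) auto
        finally show ?thesis unfolding sfv .
      qed
      ultimately show ?thesis by simp
    qed
    have sf01: "\<bar>sf x\<bar> \<le> 1" for x
    proof -
      have "0 \<le> sf x" unfolding sfv by simp
      then show ?thesis using sfb[of x] h01[of x] by simp
    qed
    have intS: "integrable M (indicator (S j) :: real \<Rightarrow> real)" if "M = fst \<mu> \<or> M = snd \<mu>" for M j
    proof -
      have m: "(indicator (S j) :: real \<Rightarrow> real) \<in> borel_measurable borel" using Sb[of j] by simp
      have b: "\<bar>(indicator (S j) :: real \<Rightarrow> real) x\<bar> \<le> 1" for x by (simp add: indicator_def)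
      show ?thesis using sm_integrable[OF \<mu> m b] that by blast
    qed
    have isf: "integral\<^sup>L M sf = (\<Sum>j\<in>{1..k}. measure M (S j)) / real k" if "M = fst \<mu> \<or> M = snd \<mu>" for M
    proof -
      have "integral\<^sup>L M sf = (\<integral>x. (\<Sum>j\<in>{1..k}. indicator (S j) x) \<partial>M) / real k"
        unfolding sf_def by simp
      also have "(\<integral>x. (\<Sum>j\<in>{1..k}. indicator (S j) x) \<partial>M) = (\<Sum>j\<in>{1..k}. (\<integral>x. indicator (S j) x \<partial>M) :: real)"
        using Bochner_Integration.integral_sum[where I="{1..k}" and M=M and f="\<lambda>j. indicator (S j)"] intS that by auto
      also have "\<dots> = (\<Sum>j\<in>{1..k}. measure M (S j))"
        using that s by auto
      finally show ?thesis .
    qed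
    have "sm_int \<mu> sf = (\<Sum>j\<in>{1..k}. sm_val \<mu> (S j)) / real k"
      unfolding sm_int_def sm_val_def using isf by (simp add: sum_subtractf diff_divide_distrib)
    then have "\<bar>sm_int \<mu> sf\<bar> \<le> (\<Sum>j\<in>{1..k}. \<bar>sm_val \<mu> (S j)\<bar>) / real k"
      by (simp add: divide_right_mono sum_abs)
    also have "\<dots> \<le> (real k * V) / real k"
    proof -
      have "(\<Sum>j\<in>{1..k}. \<bar>sm_val \<mu> (S j)\<bar>) \<le> real (card {1..k}) * V"
        by (rule sum_bounded_above) (use V Sb SA in auto)
      then show ?thesis by (intro divide_right_mono) auto
    qed
    also have "\<dots> = V" using k by simp
    finally have I1: "\<bar>sm_int \<mu> sf\<bar> \<le> V" .
    have dif: "sm_int \<mu> (\<lambda>x. h x - sf x) = sm_int \<mu> h - sm_int \<mu> sf"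
      by (rule sm_int_diff[OF \<mu> hm _ sfm sf01, of 1]) (use h01 in auto)
    have hsm: "(\<lambda>x. h x - sf x) \<in> borel_measurable borel" using hm sfm by measurable
    have bnd: "\<bar>h x - sf x\<bar> \<le> 1 / real k" for x using sfb[of x] by simp
    have "\<bar>sm_int \<mu> (\<lambda>x. h x - sf x)\<bar> \<le> (1 / real k) * measure (fst \<mu>) UNIV + (1 / real k) * measure (snd \<mu>) UNIV"
    proof -
      have "\<bar>integral\<^sup>L (fst \<mu>) (\<lambda>x. h x - sf x)\<bar> \<le> (1 / real k) * measure (fst \<mu>) (space (fst \<mu>))"
        by (rule int_abs_le[OF s(1) sm_integrable(1)[OF \<mu> hsm] bnd]) (use bnd in auto)
      moreover have "\<bar>integral\<^sup>L (snd \<mu>) (\<lambda>x. h x - sf x)\<bar> \<le> (1 / real k) * measure (snd \<mu>) (space (snd \<mu>))"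
        by (rule int_abs_le[OF s(2) sm_integrable(2)[OF \<mu> hsm] bnd]) (use bnd in auto)
      ultimately show ?thesis unfolding sm_int_def using s by simp
    qed
    also have "\<dots> = C / real k" unfolding C_def by (simp add: add_divide_distrib)
    finally have I2: "\<bar>sm_int \<mu> h - sm_int \<mu> sf\<bar> \<le> C / real k" using dif by simp
    show ?thesis using I1 I2 by linarith
  qed
  show ?thesis
  proof (rule ccontr)
    assume "\<not> ?thesis"
    then have d: "\<bar>sm_int \<mu> h\<bar> - V > 0" by simp
    obtain n :: nat where n: "C / (\<bar>sm_int \<mu> h\<bar> - V) < real n" using reals_Archimedean2 by blast
    have "C < (\<bar>sm_int \<mu> h\<bar> - V) * real (Suc n)"
    proof -
      have "C < (\<bar>sm_int \<mu> h\<bar> - V) * real n" using n d by (simp add: field_simps)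
      also have "\<dots> \<le> (\<bar>sm_int \<mu> h\<bar> - V) * real (Suc n)" using d by (intro mult_left_mono) auto
      finally show ?thesis .
    qed
    then have "C / real (Suc n) < \<bar>sm_int \<mu> h\<bar> - V" by (simp add: field_simps)
    with main[of "Suc n"] show False by simp
  qed
qed

lemma signed_bound:
  fixes h :: "real \<Rightarrow> real" and c :: real
  assumes \<mu>: "is_smeasure \<mu>" and hm: "h \<in> borel_measurable borel" and c: "c > 0"
    and hb: "\<And>x. \<bar>h x\<bar> \<le> c" and h0: "\<And>x. x \<notin> A \<Longrightarrow> h x = 0"
    and V: "\<And>B. B \<in> sets borel \<Longrightarrow> B \<subseteq> A \<Longrightarrow> \<bar>sm_val \<mu> B\<bar> \<le> V"
  shows "\<bar>sm_int \<mu> h\<bar> \<le> 2 * c * V"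
proof -
  define p where "p x = max (h x) 0 / c" for x
  define q where "q x = max (- h x) 0 / c" for x
  have [measurable]: "h \<in> borel_measurable borel" by (rule hm)
  have pm: "p \<in> borel_measurable borel" unfolding p_def by measurable
  have qm: "q \<in> borel_measurable borel" unfolding q_def by measurable
  have p01: "0 \<le> p x \<and> p x \<le> 1" for x
    using hb[of x] c unfolding p_def by (auto simp: field_simps)
  have q01: "0 \<le> q x \<and> q x \<le> 1" for x
    using hb[of x] c unfolding q_def by (auto simp: field_simps)
  have Ip: "\<bar>sm_int \<mu> p\<bar> \<le> V"
    by (rule layer_bound[OF \<mu> pm p01 _ V]) (auto simp: p_def h0)
  have Iq: "\<bar>sm_int \<mu> q\<bar> \<le> V"
    by (rule layer_bound[OF \<mu> qm q01 _ V]) (auto simp: q_def h0)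
  have hpq: "h = (\<lambda>x. c * p x - c * q x)"
    using c by (auto simp: p_def q_def max_def)
  have cpm: "(\<lambda>x. c * p x) \<in> borel_measurable borel" using pm by measurable
  have cqm: "(\<lambda>x. c * q x) \<in> borel_measurable borel" using qm by measurable
  have cpb: "\<bar>c * p x\<bar> \<le> c" for x using p01[of x] c by (simp add: abs_mult mult_left_le)
  have cqb: "\<bar>c * q x\<bar> \<le> c" for x using q01[of x] c by (simp add: abs_mult mult_left_le)
  have "sm_int \<mu> h = sm_int \<mu> (\<lambda>x. c * p x) - sm_int \<mu> (\<lambda>x. c * q x)"
    unfolding hpq by (rule sm_int_diff[OF \<mu> cpm cpb cqm cqb])
  also have "\<dots> = c * sm_int \<mu> p - c * sm_int \<mu> q"
    unfolding sm_int_def by (simp add: algebra_simps)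
  finally have eq: "sm_int \<mu> h = c * sm_int \<mu> p - c * sm_int \<mu> q" .
  have "\<bar>sm_int \<mu> h\<bar> \<le> \<bar>c * sm_int \<mu> p\<bar> + \<bar>c * sm_int \<mu> q\<bar>"
    unfolding eq by (rule abs_triangle_ineq4)
  also have "\<dots> = c * \<bar>sm_int \<mu> p\<bar> + c * \<bar>sm_int \<mu> q\<bar>" using c by (simp add: abs_mult)
  also have "\<dots> \<le> c * V + c * V" using Ip Iq c by (intro add_mono mult_left_mono) auto
  finally show ?thesis by (simp add: ac_simps)
qed

lemma meas_split3:
  assumes "finite_measure M" "sets M = sets borel" "x \<le> y" "y \<le> (z::real)"
  shows "measure M {x<..z} = measure M {x<..y} + measure M {y<..z}"
proof -
  have e: "{x<..y} \<union> {y<..z} = {x<..z}" using assms by auto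
  have "measure M ({x<..y} \<union> {y<..z}) = measure M {x<..y} + measure M {y<..z}"
    by (rule finite_measure.finite_measure_Union[OF assms(1)]) (use assms in auto)
  then show ?thesis unfolding e .
qed

lemma meas_split_minf:
  assumes "finite_measure M" "sets M = sets borel" "x \<le> (y::real)"
  shows "measure M {..y} = measure M {..x} + measure M {x<..y}"
proof -
  have e: "{..x} \<union> {x<..y} = {..y}" using assms by auto
  have "measure M ({..x} \<union> {x<..y}) = measure M {..x} + measure M {x<..y}"
    by (rule finite_measure.finite_measure_Union[OF assms(1)]) (use assms in auto)
  then show ?thesis unfolding e .
qed

lemma meas_split_pinf:
  assumes "finite_measure M" "sets M = sets borel" "x \<le> (y::real)"
  shows "measure M {x<..} = measure M {x<..y} + measure M {y<..}"
proof -
  have e: "{x<..y} \<union> {y<..} = {x<..}" using assms by auto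
  have "measure M ({x<..y} \<union> {y<..}) = measure M {x<..y} + measure M {y<..}"
    by (rule finite_measure.finite_measure_Union[OF assms(1)]) (use assms in auto)
  then show ?thesis unfolding e .
qed

lemma F_diff:
  assumes \<mu>: "is_smeasure \<mu>" and ab: "a \<le> b"
  shows "sm_val \<mu> {a<..b} = sm_F \<alpha> \<mu> b - sm_F \<alpha> \<mu> a"
proof -
  note s = smD[OF \<mu>]
  show ?thesis
  proof (cases \<alpha>)
    case (real c)
    consider "c \<le> a" | "a < c" "c \<le> b" | "b < c" by linarith
    then show ?thesis
    proof cases
      case 1
      then show ?thesis using real ab meas_split3[OF s(1) s(3), of c a b] meas_split3[OF s(2) s(4), of c a b]
        by (simp add: sm_F_def sm_val_def)
    next
      case 2
      then show ?thesis using real ab meas_split3[OF s(1) s(3), of a c b] meas_split3[OF s(2) s(4), of a c b]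
        by (simp add: sm_F_def sm_val_def)
    next
      case 3
      then show ?thesis using real ab meas_split3[OF s(1) s(3), of a b c] meas_split3[OF s(2) s(4), of a b c]
        by (simp add: sm_F_def sm_val_def)
    qed
  next
    case PInf
    then show ?thesis using ab meas_split_pinf[OF s(1) s(3), of a b] meas_split_pinf[OF s(2) s(4), of a b]
      by (simp add: sm_F_def sm_val_def)
  next
    case MInf
    then show ?thesis using ab meas_split_minf[OF s(1) s(3), of a b] meas_split_minf[OF s(2) s(4), of a b]
      by (simp add: sm_F_def sm_val_def)
  qed
qed

definition trap :: "real \<Rightarrow> real \<Rightarrow> real \<Rightarrow> real \<Rightarrow> real \<Rightarrow> real" where
  "trap a b c d x = max 0 (min 1 (min ((x - a) / (b - a)) ((d - x) / (d - c))))"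

lemma trap_cont: "continuous_on UNIV (trap a b c d)"
proof -
  have e: "trap a b c d = (\<lambda>x. max 0 (min 1 (min ((x - a) * inverse (b - a)) ((d - x) * inverse (d - c)))))"
    by (simp add: fun_eq_iff trap_def divide_inverse)
  show ?thesis unfolding e by (intro continuous_intros)
qed

lemma trap_01: "0 \<le> trap a b c d x \<and> trap a b c d x \<le> 1"
  unfolding trap_def by auto

lemma trap_left: "a < b \<Longrightarrow> x \<le> a \<Longrightarrow> trap a b c d x = 0"
proof -
  assume "a < b" "x \<le> a"
  then have u: "(x - a) / (b - a) \<le> 0" by (simp add: divide_nonpos_pos)
  then have "min 1 (min ((x - a) / (b - a)) ((d - x) / (d - c))) \<le> 0" by (simp add: min_le_iff_disj)
  then show ?thesis unfolding trap_def by (simp add: max_absorb1)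
qed

lemma trap_right: "c < d \<Longrightarrow> d \<le> x \<Longrightarrow> trap a b c d x = 0"
proof -
  assume "c < d" "d \<le> x"
  then have u: "(d - x) / (d - c) \<le> 0" by (simp add: divide_nonpos_pos)
  then have "min 1 (min ((x - a) / (b - a)) ((d - x) / (d - c))) \<le> 0" by (simp add: min_le_iff_disj)
  then show ?thesis unfolding trap_def by (simp add: max_absorb1)
qed

lemma trap_mid: "a < b \<Longrightarrow> c < d \<Longrightarrow> b \<le> x \<Longrightarrow> x \<le> c \<Longrightarrow> trap a b c d x = 1"
proof -
  assume "a < b" "c < d" "b \<le> x" "x \<le> c"
  then have "1 \<le> (x - a) / (b - a)" "1 \<le> (d - x) / (d - c)" by (simp_all add: le_divide_eq)
  then have "min 1 (min ((x - a) / (b - a)) ((d - x) / (d - c))) = 1" by simp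
  then show ?thesis unfolding trap_def by simp
qed

lemma trap_supp: "a < b \<Longrightarrow> c < d \<Longrightarrow> \<exists>K. compact K \<and> (\<forall>x. x \<notin> K \<longrightarrow> trap a b c d x = 0)"
  by (rule exI[of _ "{a..d}"]) (auto simp: trap_left trap_right)

lemma ev_small: "(t::real) > 0 \<Longrightarrow> \<exists>k0. \<forall>k\<ge>k0. 1 / real (Suc k) < t"
proof -
  assume t: "t > 0"
  obtain n where n: "inverse (real (Suc n)) < t" using reals_Archimedean[OF t] by blast
  have "1 / real (Suc k) < t" if "k \<ge> n" for k
  proof -
    have "1 / real (Suc k) \<le> 1 / real (Suc n)" using that by (intro divide_left_mono) auto
    then show ?thesis using n by (simp add: inverse_eq_divide)
  qed
  then show ?thesis by blast
qed

lemma ev_large: "\<exists>k0. \<forall>k\<ge>k0. (t::real) \<le> real k"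
proof -
  obtain n :: nat where "t \<le> real n" using real_arch_simple by blast
  then show ?thesis by (intro exI[of _ n]) auto
qed

lemma nm_ev:
  assumes "no_mass_at \<mu>s x" "\<epsilon> > 0"
  shows "\<exists>N. open N \<and> x \<in> N \<and> eventually (\<lambda>n. sm_var (\<mu>s n) N < \<epsilon>) sequentially"
proof -
  obtain N where N: "open N" "x \<in> N" "limsup (\<lambda>n. ereal (sm_var (\<mu>s n) N)) \<le> ereal (\<epsilon>/2)"
    using assms unfolding no_mass_at_def by (meson half_gt_zero)
  then have "limsup (\<lambda>n. ereal (sm_var (\<mu>s n) N)) < ereal \<epsilon>" using assms(2)
    using le_less_trans[of _ "ereal (\<epsilon>/2)" "ereal \<epsilon>"] by simp
  then have "eventually (\<lambda>n. ereal (sm_var (\<mu>s n) N) < ereal \<epsilon>) sequentially"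
    by (rule Limsup_lessD)
  then have "eventually (\<lambda>n. sm_var (\<mu>s n) N < \<epsilon>) sequentially" by simp
  with N show ?thesis by blast
qed

lemma nm_ev_minf:
  assumes "no_mass_at_minf \<mu>s" "\<epsilon> > 0"
  shows "\<exists>c. eventually (\<lambda>n. sm_var (\<mu>s n) {..<c} < \<epsilon>) sequentially"
proof -
  obtain c where N: "limsup (\<lambda>n. ereal (sm_var (\<mu>s n) {..<c})) \<le> ereal (\<epsilon>/2)"
    using assms unfolding no_mass_at_minf_def by (meson half_gt_zero)
  then have "limsup (\<lambda>n. ereal (sm_var (\<mu>s n) {..<c})) < ereal \<epsilon>" using assms(2)
    using le_less_trans[of _ "ereal (\<epsilon>/2)" "ereal \<epsilon>"] by simp
  then have "eventually (\<lambda>n. ereal (sm_var (\<mu>s n) {..<c}) < ereal \<epsilon>) sequentially"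
    by (rule Limsup_lessD)
  then show ?thesis by auto
qed

lemma nm_ev_pinf:
  assumes "no_mass_at_pinf \<mu>s" "\<epsilon> > 0"
  shows "\<exists>c. eventually (\<lambda>n. sm_var (\<mu>s n) {c<..} < \<epsilon>) sequentially"
proof -
  obtain c where N: "limsup (\<lambda>n. ereal (sm_var (\<mu>s n) {c<..})) \<le> ereal (\<epsilon>/2)"
    using assms unfolding no_mass_at_pinf_def by (meson half_gt_zero)
  then have "limsup (\<lambda>n. ereal (sm_var (\<mu>s n) {c<..})) < ereal \<epsilon>" using assms(2)
    using le_less_trans[of _ "ereal (\<epsilon>/2)" "ereal \<epsilon>"] by simp
  then have "eventually (\<lambda>n. ereal (sm_var (\<mu>s n) {c<..}) < ereal \<epsilon>) sequentially"
    by (rule Limsup_lessD)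
  then show ?thesis by auto
qed

lemma sm_int_dct:
  fixes g :: "nat \<Rightarrow> real \<Rightarrow> real" and f :: "real \<Rightarrow> real"
  assumes \<mu>: "is_smeasure \<mu>" and gm: "\<And>k. g k \<in> borel_measurable borel"
    and fm: "f \<in> borel_measurable borel"
    and gb: "\<And>k x. \<bar>g k x\<bar> \<le> 1" and lim: "\<And>x. (\<lambda>k. g k x) \<longlonglongrightarrow> f x"
  shows "(\<lambda>k. sm_int \<mu> (g k)) \<longlonglongrightarrow> sm_int \<mu> f"
proof -
  note s = smD[OF \<mu>]
  have "(\<lambda>k. integral\<^sup>L M (g k)) \<longlonglongrightarrow> integral\<^sup>L M f" if M: "M = fst \<mu> \<or> M = snd \<mu>" for M
  proof (rule integral_dominated_convergence[where w="\<lambda>x. 1"])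
    have sM: "sets M = sets borel" "finite_measure M" using M s by auto
    show "f \<in> borel_measurable M" using fm measurable_cong_sets[OF sM(1) refl, of borel] by metis
    show "g k \<in> borel_measurable M" for k using gm[of k] measurable_cong_sets[OF sM(1) refl, of borel] by metis
    show "integrable M (\<lambda>x. 1::real)" using finite_measure.integrable_const[OF sM(2), of "1::real"] by simp
    show "AE x in M. (\<lambda>k. g k x) \<longlonglongrightarrow> f x" using lim by simp
    show "AE x in M. norm (g k x) \<le> 1" for k using gb by simp
  qed
  from tendsto_diff[OF this[of "fst \<mu>"] this[of "snd \<mu>"]] show ?thesis
    unfolding sm_int_def by simp
qed

lemma tri3: "\<bar>(a::real) + b - c\<bar> \<le> \<bar>a\<bar> + \<bar>b\<bar> + \<bar>c\<bar>"
  by (simp add: abs_le_iff) linarith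

lemma vague_ind:
  fixes g :: "nat \<Rightarrow> real \<Rightarrow> real" and I :: "real set"
  assumes \<mu>s: "\<And>n. is_smeasure (\<mu>s n)" and \<mu>: "is_smeasure \<mu>" and vc: "vague_conv \<mu>s \<mu>"
    and Ib: "I \<in> sets borel"
    and gc: "\<And>k. continuous_on UNIV (g k)"
    and gK: "\<And>k. \<exists>K. compact K \<and> (\<forall>x. x \<notin> K \<longrightarrow> g k x = 0)"
    and gb: "\<And>k x. 0 \<le> g k x \<and> g k x \<le> 1"
    and lim: "\<And>x. (\<lambda>k. g k x) \<longlonglongrightarrow> indicator I x"
    and small: "\<And>\<epsilon>. \<epsilon> > 0 \<Longrightarrow> \<exists>k0. \<forall>k\<ge>k0. \<exists>X Y. X \<in> sets borel \<and>
        (\<forall>x. x \<notin> X \<union> Y \<longrightarrow> g k x = indicator I x) \<and>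
        eventually (\<lambda>n. sm_var (\<mu>s n) X < \<epsilon> \<and> sm_var (\<mu>s n) Y < \<epsilon>) sequentially"
  shows "(\<lambda>n. sm_val (\<mu>s n) I) \<longlonglongrightarrow> sm_val \<mu> I"
proof (rule LIMSEQ_I)
  fix r :: real assume r: "r > 0"
  have gm: "g k \<in> borel_measurable borel" for k using gc[of k] by (rule borel_measurable_continuous_onI)
  have Im: "(indicator I :: real \<Rightarrow> real) \<in> borel_measurable borel" using Ib by simp
  have gb': "\<bar>g k x\<bar> \<le> 1" for k x using gb[of k x] by simp
  have dct: "(\<lambda>k. sm_int \<mu> (g k)) \<longlonglongrightarrow> sm_val \<mu> I"
    using sm_int_dct[OF \<mu> gm Im gb' lim] sm_int_indicator[OF \<mu>] by simp
  obtain k1 where k1: "\<forall>k\<ge>k1. norm (sm_int \<mu> (g k) - sm_val \<mu> I) < r/4"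
    using LIMSEQ_D[OF dct, of "r/4"] r by auto
  obtain k0 where k0: "\<forall>k\<ge>k0. \<exists>X Y. X \<in> sets borel \<and>
        (\<forall>x. x \<notin> X \<union> Y \<longrightarrow> g k x = indicator I x) \<and>
        eventually (\<lambda>n. sm_var (\<mu>s n) X < r/8 \<and> sm_var (\<mu>s n) Y < r/8) sequentially"
    using small[of "r/8"] r by auto
  define k where "k = max k0 k1"
  obtain X Y where XB: "X \<in> sets borel" and out: "\<forall>x. x \<notin> X \<union> Y \<longrightarrow> g k x = indicator I x"
    and ev: "eventually (\<lambda>n. sm_var (\<mu>s n) X < r/8 \<and> sm_var (\<mu>s n) Y < r/8) sequentially"
  proof -
    have "k \<ge> k0" unfolding k_def by simp
    then show ?thesis using k0 that by blast
  qed
  have kk: "norm (sm_int \<mu> (g k) - sm_val \<mu> I) < r/4" using k1 k_def by auto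
  have vk: "(\<lambda>n. sm_int (\<mu>s n) (g k)) \<longlonglongrightarrow> sm_int \<mu> (g k)"
    using vc gc gK unfolding vague_conv_def by blast
  obtain n1 where n1: "\<forall>n\<ge>n1. norm (sm_int (\<mu>s n) (g k) - sm_int \<mu> (g k)) < r/4"
    using LIMSEQ_D[OF vk, of "r/4"] r by auto
  obtain n2 where n2: "\<forall>n\<ge>n2. sm_var (\<mu>s n) X < r/8 \<and> sm_var (\<mu>s n) Y < r/8"
    using ev unfolding eventually_sequentially by auto
  show "\<exists>no. \<forall>n\<ge>no. norm (sm_val (\<mu>s n) I - sm_val \<mu> I) < r"
  proof (intro exI allI impI)
    fix n assume n: "n \<ge> max n1 n2"
    have ib: "\<bar>(indicator I :: real \<Rightarrow> real) x\<bar> \<le> 1" for x by (simp add: indicator_def)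
    have d: "sm_val (\<mu>s n) I - sm_int (\<mu>s n) (g k) = sm_int (\<mu>s n) (\<lambda>x. indicator I x - g k x)"
      using sm_int_diff[OF \<mu>s Im ib gm gb'] sm_int_indicator[OF \<mu>s] by simp
    have dm: "(\<lambda>x. indicator I x - g k x) \<in> borel_measurable borel" using Im gm by measurable
    have "\<bar>sm_int (\<mu>s n) (\<lambda>x. indicator I x - g k x)\<bar> \<le> 2 * 1 * (r/8 + r/8)"
    proof (rule signed_bound[OF \<mu>s dm, where A="X \<union> Y"])
      show "\<bar>indicator I x - g k x\<bar> \<le> 1" for x using gb[of k x] by (auto simp: indicator_def)
      show "x \<notin> X \<union> Y \<Longrightarrow> indicator I x - g k x = 0" for x using out by auto
      show "\<bar>sm_val (\<mu>s n) B\<bar> \<le> r/8 + r/8" if "B \<in> sets borel" "B \<subseteq> X \<union> Y" for B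
      proof -
        have "\<bar>sm_val (\<mu>s n) B\<bar> \<le> sm_var (\<mu>s n) X + sm_var (\<mu>s n) Y"
          by (rule two_cover[OF \<mu>s that(1) XB that(2)])
        also have "\<dots> \<le> r/8 + r/8" using n2 n by force
        finally show ?thesis .
      qed
    qed simp
    moreover have "\<bar>sm_int (\<mu>s n) (g k) - sm_int \<mu> (g k)\<bar> < r/4" using n1 n by force
    ultimately show "norm (sm_val (\<mu>s n) I - sm_val \<mu> I) < r" proof -
      have "sm_val (\<mu>s n) I - sm_val \<mu> I = sm_int (\<mu>s n) (\<lambda>x. indicator I x - g k x) + (sm_int (\<mu>s n) (g k) - sm_int \<mu> (g k)) - (sm_val \<mu> I - sm_int \<mu> (g k))"
        using d by simp
      then have "\<bar>sm_val (\<mu>s n) I - sm_val \<mu> I\<bar> \<le> \<bar>sm_int (\<mu>s n) (\<lambda>x. indicator I x - g k x)\<bar> + \<bar>sm_int (\<mu>s n) (g k) - sm_int \<mu> (g k)\<bar> + \<bar>sm_val \<mu> I - sm_int \<mu> (g k)\<bar>"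
        by (simp add: tri3)
      moreover have "\<bar>sm_val \<mu> I - sm_int \<mu> (g k)\<bar> < r/4" using kk by (simp add: abs_minus_commute)
      moreover have "\<bar>sm_int (\<mu>s n) (\<lambda>x. indicator I x - g k x)\<bar> \<le> r/2"
        using \<open>\<bar>sm_int (\<mu>s n) (\<lambda>x. indicator I x - g k x)\<bar> \<le> 2 * 1 * (r/8 + r/8)\<close> by simp
      ultimately show ?thesis using
        \<open>\<bar>sm_int (\<mu>s n) (g k) - sm_int \<mu> (g k)\<bar> < r/4\<close> unfolding real_norm_def by linarith
    qed
  qed
qed

lemma ball_out:
  assumes "ball (l::real) \<rho> \<subseteq> N" "x \<notin> N"
  shows "x \<le> l - \<rho> \<or> x \<ge> l + \<rho>"
proof (rule ccontr)
  assume "\<not> ?thesis"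
  then have "x \<in> ball l \<rho>" by (auto simp: dist_real_def)
  with assms show False by auto
qed

lemma conv_ioc:
  assumes \<mu>s: "\<And>n. is_smeasure (\<mu>s n)" and \<mu>: "is_smeasure \<mu>" and vc: "vague_conv \<mu>s \<mu>"
    and nm: "\<And>x. no_mass_at \<mu>s x" and lr: "l < r"
  shows "(\<lambda>n. sm_val (\<mu>s n) {l<..r}) \<longlonglongrightarrow> sm_val \<mu> {l<..r}"
proof (rule vague_ind[OF \<mu>s \<mu> vc, where g="\<lambda>k. trap l (l + 1 / real (Suc k)) r (r + 1 / real (Suc k))"])
  show "{l<..r} \<in> sets borel" by simp
  show "continuous_on UNIV (trap l (l + 1 / real (Suc k)) r (r + 1 / real (Suc k)))" for k
    by (rule trap_cont)
  show "\<exists>K. compact K \<and> (\<forall>x. x \<notin> K \<longrightarrow> trap l (l + 1 / real (Suc k)) r (r + 1 / real (Suc k)) x = 0)" for k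
    by (rule trap_supp) auto
  show "0 \<le> trap l (l + 1 / real (Suc k)) r (r + 1 / real (Suc k)) x \<and> trap l (l + 1 / real (Suc k)) r (r + 1 / real (Suc k)) x \<le> 1" for k x
    by (rule trap_01)
  show "(\<lambda>k. trap l (l + 1 / real (Suc k)) r (r + 1 / real (Suc k)) x) \<longlonglongrightarrow> (indicator {l<..r} x :: real)" for x
  proof (rule tendsto_eventually)
    consider "x \<le> l" | "l < x" "x \<le> r" | "r < x" by linarith
    then show "eventually (\<lambda>k. trap l (l + 1 / real (Suc k)) r (r + 1 / real (Suc k)) x = (indicator {l<..r} x :: real)) sequentially"
    proof cases
      case 1
      then show ?thesis by (intro always_eventually allI) (simp add: trap_left)
    next
      case 2
      obtain k0 where k0: "\<forall>k\<ge>k0. 1 / real (Suc k) < x - l" using ev_small[of "x - l"] 2 by auto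
      show ?thesis unfolding eventually_sequentially
        by (rule exI[of _ k0]) (use k0 2 in \<open>auto intro!: trap_mid\<close>)
    next
      case 3
      obtain k0 where k0: "\<forall>k\<ge>k0. 1 / real (Suc k) < x - r" using ev_small[of "x - r"] 3 by auto
      show ?thesis unfolding eventually_sequentially
      proof (rule exI[of _ k0], intro allI impI)
        fix k assume "k \<ge> k0"
        then have "1 / real (Suc k) < x - r" using k0 by auto
        then show "trap l (l + 1 / real (Suc k)) r (r + 1 / real (Suc k)) x = (indicator {l<..r} x :: real)"
          using 3 by (subst trap_right) auto
      qed
    qed
  qed
  show "\<exists>k0. \<forall>k\<ge>k0. \<exists>X Y. X \<in> sets borel \<and>
        (\<forall>x. x \<notin> X \<union> Y \<longrightarrow> trap l (l + 1 / real (Suc k)) r (r + 1 / real (Suc k)) x = (indicator {l<..r} x :: real)) \<and>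
        eventually (\<lambda>n. sm_var (\<mu>s n) X < \<epsilon> \<and> sm_var (\<mu>s n) Y < \<epsilon>) sequentially" if e: "\<epsilon> > 0" for \<epsilon>
  proof -
    obtain Nl where Nl: "open Nl" "l \<in> Nl" "eventually (\<lambda>n. sm_var (\<mu>s n) Nl < \<epsilon>) sequentially"
      using nm_ev[OF nm e] by blast
    obtain Nr where Nr: "open Nr" "r \<in> Nr" "eventually (\<lambda>n. sm_var (\<mu>s n) Nr < \<epsilon>) sequentially"
      using nm_ev[OF nm e] by blast
    obtain \<rho>l where \<rho>l: "\<rho>l > 0" "ball l \<rho>l \<subseteq> Nl" using Nl open_contains_ball by blast
    obtain \<rho>r where \<rho>r: "\<rho>r > 0" "ball r \<rho>r \<subseteq> Nr" using Nr open_contains_ball by blast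
    obtain k0 where k0: "\<forall>k\<ge>k0. 1 / real (Suc k) < min \<rho>l \<rho>r" using ev_small[of "min \<rho>l \<rho>r"] \<rho>l \<rho>r by auto
    show ?thesis
    proof (intro exI[of _ k0] allI impI)
      fix k assume k: "k \<ge> k0"
      have ek: "1 / real (Suc k) < \<rho>l" "1 / real (Suc k) < \<rho>r" using k0 k by auto
      have out: "\<forall>x. x \<notin> Nl \<union> Nr \<longrightarrow> trap l (l + 1 / real (Suc k)) r (r + 1 / real (Suc k)) x = (indicator {l<..r} x :: real)"
      proof (intro allI impI)
        fix x assume x: "x \<notin> Nl \<union> Nr"
        have xl: "x \<le> l - \<rho>l \<or> x \<ge> l + \<rho>l" using ball_out[OF \<rho>l(2)] x by auto
        have xr: "x \<le> r - \<rho>r \<or> x \<ge> r + \<rho>r" using ball_out[OF \<rho>r(2)] x by auto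
        consider "x \<le> l" | "l < x" "x \<le> r" | "r < x" by linarith
        then show "trap l (l + 1 / real (Suc k)) r (r + 1 / real (Suc k)) x = (indicator {l<..r} x :: real)"
        proof cases
          case 1 then show ?thesis by (simp add: trap_left)
        next
          case 2 then show ?thesis using xl ek by (subst trap_mid) auto
        next
          case 3 then show ?thesis using xr ek by (subst trap_right) auto
        qed
      qed
      show "\<exists>X Y. X \<in> sets borel \<and>
        (\<forall>x. x \<notin> X \<union> Y \<longrightarrow> trap l (l + 1 / real (Suc k)) r (r + 1 / real (Suc k)) x = (indicator {l<..r} x :: real)) \<and>
        eventually (\<lambda>n. sm_var (\<mu>s n) X < \<epsilon> \<and> sm_var (\<mu>s n) Y < \<epsilon>) sequentially"
        by (intro exI[of _ Nl] exI[of _ Nr] conjI eventually_conj out Nl(3) Nr(3)) (use Nl in simp)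
    qed
  qed
qed

lemma conv_iic:
  assumes \<mu>s: "\<And>n. is_smeasure (\<mu>s n)" and \<mu>: "is_smeasure \<mu>" and vc: "vague_conv \<mu>s \<mu>"
    and nm: "\<And>x. no_mass_at \<mu>s x" and mi: "no_mass_at_minf \<mu>s"
  shows "(\<lambda>n. sm_val (\<mu>s n) {..x0}) \<longlonglongrightarrow> sm_val \<mu> {..x0}"
proof (rule vague_ind[OF \<mu>s \<mu> vc, where g="\<lambda>k. trap (- real k - 2) (- real k - 1) x0 (x0 + 1 / real (Suc k))"])
  show "{..x0} \<in> sets borel" by simp
  show "continuous_on UNIV (trap (- real k - 2) (- real k - 1) x0 (x0 + 1 / real (Suc k)))" for k
    by (rule trap_cont)
  show "\<exists>K. compact K \<and> (\<forall>x. x \<notin> K \<longrightarrow> trap (- real k - 2) (- real k - 1) x0 (x0 + 1 / real (Suc k)) x = 0)" for k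
    by (rule trap_supp) auto
  show "0 \<le> trap (- real k - 2) (- real k - 1) x0 (x0 + 1 / real (Suc k)) x \<and> trap (- real k - 2) (- real k - 1) x0 (x0 + 1 / real (Suc k)) x \<le> 1" for k x
    by (rule trap_01)
  show "(\<lambda>k. trap (- real k - 2) (- real k - 1) x0 (x0 + 1 / real (Suc k)) x) \<longlonglongrightarrow> (indicator {..x0} x :: real)" for x
  proof (rule tendsto_eventually)
    show "eventually (\<lambda>k. trap (- real k - 2) (- real k - 1) x0 (x0 + 1 / real (Suc k)) x = (indicator {..x0} x :: real)) sequentially"
    proof (cases "x \<le> x0")
      case True
      obtain k0 where k0: "\<forall>k\<ge>k0. - x \<le> real k" using ev_large by blast
      show ?thesis unfolding eventually_sequentially
      proof (rule exI[of _ k0], intro allI impI)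
        fix k assume "k \<ge> k0"
        then have "- x \<le> real k" using k0 by auto
        then show "trap (- real k - 2) (- real k - 1) x0 (x0 + 1 / real (Suc k)) x = (indicator {..x0} x :: real)"
          using True by (subst trap_mid) auto
      qed
    next
      case False
      obtain k0 where k0: "\<forall>k\<ge>k0. 1 / real (Suc k) < x - x0" using ev_small[of "x - x0"] False by auto
      show ?thesis unfolding eventually_sequentially
      proof (rule exI[of _ k0], intro allI impI)
        fix k assume "k \<ge> k0"
        then have "1 / real (Suc k) < x - x0" using k0 by auto
        then show "trap (- real k - 2) (- real k - 1) x0 (x0 + 1 / real (Suc k)) x = (indicator {..x0} x :: real)"
          using False by (subst trap_right) auto
      qed
    qed
  qed
  show "\<exists>k0. \<forall>k\<ge>k0. \<exists>X Y. X \<in> sets borel \<and>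
        (\<forall>x. x \<notin> X \<union> Y \<longrightarrow> trap (- real k - 2) (- real k - 1) x0 (x0 + 1 / real (Suc k)) x = (indicator {..x0} x :: real)) \<and>
        eventually (\<lambda>n. sm_var (\<mu>s n) X < \<epsilon> \<and> sm_var (\<mu>s n) Y < \<epsilon>) sequentially" if e: "\<epsilon> > 0" for \<epsilon>
  proof -
    obtain N where N: "open N" "x0 \<in> N" "eventually (\<lambda>n. sm_var (\<mu>s n) N < \<epsilon>) sequentially"
      using nm_ev[OF nm e] by blast
    obtain c where c: "eventually (\<lambda>n. sm_var (\<mu>s n) {..<c} < \<epsilon>) sequentially"
      using nm_ev_minf[OF mi e] by blast
    obtain \<rho> where \<rho>: "\<rho> > 0" "ball x0 \<rho> \<subseteq> N" using N open_contains_ball by blast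
    obtain k0 where k0: "\<forall>k\<ge>k0. 1 / real (Suc k) < \<rho>" using ev_small[of \<rho>] \<rho> by auto
    obtain k1 where k1: "\<forall>k\<ge>k1. - c \<le> real k" using ev_large by blast
    show ?thesis
    proof (intro exI[of _ "max k0 k1"] allI impI)
      fix k assume k: "k \<ge> max k0 k1"
      have ek: "1 / real (Suc k) < \<rho>" "- c \<le> real k" using k0 k1 k by auto
      have out: "\<forall>x. x \<notin> N \<union> {..<c} \<longrightarrow> trap (- real k - 2) (- real k - 1) x0 (x0 + 1 / real (Suc k)) x = (indicator {..x0} x :: real)"
      proof (intro allI impI)
        fix x assume x: "x \<notin> N \<union> {..<c}"
        have xl: "x \<le> x0 - \<rho> \<or> x \<ge> x0 + \<rho>" using ball_out[OF \<rho>(2)] x by auto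
        have xc: "c \<le> x" using x by auto
        show "trap (- real k - 2) (- real k - 1) x0 (x0 + 1 / real (Suc k)) x = (indicator {..x0} x :: real)"
        proof (cases "x \<le> x0")
          case True then show ?thesis using xc ek by (subst trap_mid) auto
        next
          case False then show ?thesis using xl ek by (subst trap_right) auto
        qed
      qed
      show "\<exists>X Y. X \<in> sets borel \<and>
        (\<forall>x. x \<notin> X \<union> Y \<longrightarrow> trap (- real k - 2) (- real k - 1) x0 (x0 + 1 / real (Suc k)) x = (indicator {..x0} x :: real)) \<and>
        eventually (\<lambda>n. sm_var (\<mu>s n) X < \<epsilon> \<and> sm_var (\<mu>s n) Y < \<epsilon>) sequentially"
        by (intro exI[of _ N] exI[of _ "{..<c}"] conjI eventually_conj out N(3) c) (use N in simp)
    qed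
  qed
qed

lemma conv_ioi:
  assumes \<mu>s: "\<And>n. is_smeasure (\<mu>s n)" and \<mu>: "is_smeasure \<mu>" and vc: "vague_conv \<mu>s \<mu>"
    and nm: "\<And>x. no_mass_at \<mu>s x" and pi: "no_mass_at_pinf \<mu>s"
  shows "(\<lambda>n. sm_val (\<mu>s n) {x0<..}) \<longlonglongrightarrow> sm_val \<mu> {x0<..}"
proof (rule vague_ind[OF \<mu>s \<mu> vc, where g="\<lambda>k. trap x0 (x0 + 1 / real (Suc k)) (real k + 1) (real k + 2)"])
  show "{x0<..} \<in> sets borel" by simp
  show "continuous_on UNIV (trap x0 (x0 + 1 / real (Suc k)) (real k + 1) (real k + 2))" for k
    by (rule trap_cont)
  show "\<exists>K. compact K \<and> (\<forall>x. x \<notin> K \<longrightarrow> trap x0 (x0 + 1 / real (Suc k)) (real k + 1) (real k + 2) x = 0)" for k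
    by (rule trap_supp) auto
  show "0 \<le> trap x0 (x0 + 1 / real (Suc k)) (real k + 1) (real k + 2) x \<and> trap x0 (x0 + 1 / real (Suc k)) (real k + 1) (real k + 2) x \<le> 1" for k x
    by (rule trap_01)
  show "(\<lambda>k. trap x0 (x0 + 1 / real (Suc k)) (real k + 1) (real k + 2) x) \<longlonglongrightarrow> (indicator {x0<..} x :: real)" for x
  proof (rule tendsto_eventually)
    show "eventually (\<lambda>k. trap x0 (x0 + 1 / real (Suc k)) (real k + 1) (real k + 2) x = (indicator {x0<..} x :: real)) sequentially"
    proof (cases "x \<le> x0")
      case True
      then show ?thesis by (intro always_eventually allI) (simp add: trap_left)
    next
      case False
      obtain k0 where k0: "\<forall>k\<ge>k0. 1 / real (Suc k) < x - x0" using ev_small[of "x - x0"] False by auto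
      obtain k1 where k1: "\<forall>k\<ge>k1. x \<le> real k" using ev_large by blast
      show ?thesis unfolding eventually_sequentially
      proof (rule exI[of _ "max k0 k1"], intro allI impI)
        fix k assume "k \<ge> max k0 k1"
        then have "1 / real (Suc k) < x - x0" "x \<le> real k" using k0 k1 by auto
        then show "trap x0 (x0 + 1 / real (Suc k)) (real k + 1) (real k + 2) x = (indicator {x0<..} x :: real)"
          using False by (subst trap_mid) auto
      qed
    qed
  qed
  show "\<exists>k0. \<forall>k\<ge>k0. \<exists>X Y. X \<in> sets borel \<and>
        (\<forall>x. x \<notin> X \<union> Y \<longrightarrow> trap x0 (x0 + 1 / real (Suc k)) (real k + 1) (real k + 2) x = (indicator {x0<..} x :: real)) \<and>
        eventually (\<lambda>n. sm_var (\<mu>s n) X < \<epsilon> \<and> sm_var (\<mu>s n) Y < \<epsilon>) sequentially" if e: "\<epsilon> > 0" for \<epsilon>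
  proof -
    obtain N where N: "open N" "x0 \<in> N" "eventually (\<lambda>n. sm_var (\<mu>s n) N < \<epsilon>) sequentially"
      using nm_ev[OF nm e] by blast
    obtain c where c: "eventually (\<lambda>n. sm_var (\<mu>s n) {c<..} < \<epsilon>) sequentially"
      using nm_ev_pinf[OF pi e] by blast
    obtain \<rho> where \<rho>: "\<rho> > 0" "ball x0 \<rho> \<subseteq> N" using N open_contains_ball by blast
    obtain k0 where k0: "\<forall>k\<ge>k0. 1 / real (Suc k) < \<rho>" using ev_small[of \<rho>] \<rho> by auto
    obtain k1 where k1: "\<forall>k\<ge>k1. c \<le> real k" using ev_large by blast
    show ?thesis
    proof (intro exI[of _ "max k0 k1"] allI impI)
      fix k assume k: "k \<ge> max k0 k1"
      have ek: "1 / real (Suc k) < \<rho>" "c \<le> real k" using k0 k1 k by auto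
      have out: "\<forall>x. x \<notin> N \<union> {c<..} \<longrightarrow> trap x0 (x0 + 1 / real (Suc k)) (real k + 1) (real k + 2) x = (indicator {x0<..} x :: real)"
      proof (intro allI impI)
        fix x assume x: "x \<notin> N \<union> {c<..}"
        have xl: "x \<le> x0 - \<rho> \<or> x \<ge> x0 + \<rho>" using ball_out[OF \<rho>(2)] x by auto
        have xc: "x \<le> c" using x by auto
        show "trap x0 (x0 + 1 / real (Suc k)) (real k + 1) (real k + 2) x = (indicator {x0<..} x :: real)"
        proof (cases "x \<le> x0")
          case True then show ?thesis by (simp add: trap_left)
        next
          case False then show ?thesis using xl xc ek by (subst trap_mid) auto
        qed
      qed
      show "\<exists>X Y. X \<in> sets borel \<and>
        (\<forall>x. x \<notin> X \<union> Y \<longrightarrow> trap x0 (x0 + 1 / real (Suc k)) (real k + 1) (real k + 2) x = (indicator {x0<..} x :: real)) \<and>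
        eventually (\<lambda>n. sm_var (\<mu>s n) X < \<epsilon> \<and> sm_var (\<mu>s n) Y < \<epsilon>) sequentially"
        by (intro exI[of _ N] exI[of _ "{c<..}"] conjI eventually_conj out N(3) c) (use N in simp)
    qed
  qed
qed

lemma b_to_a:
  assumes \<mu>s: "\<And>n. is_smeasure (\<mu>s n)" and \<mu>: "is_smeasure \<mu>"
    and nm: "\<And>x. no_mass_at \<mu>s x"
    and mi: "\<alpha> = -\<infinity> \<Longrightarrow> no_mass_at_minf \<mu>s"
    and pi: "\<alpha> = \<infinity> \<Longrightarrow> no_mass_at_pinf \<mu>s"
    and vc: "vague_conv \<mu>s \<mu>"
  shows "(\<lambda>n. sm_F \<alpha> (\<mu>s n) x) \<longlonglongrightarrow> sm_F \<alpha> \<mu> x"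
proof (cases \<alpha>)
  case (real a)
  consider "a = x" | "a < x" | "x < a" by linarith
  then show ?thesis
  proof cases
    case 1 then show ?thesis using real by (simp add: sm_F_def sm_val_def)
  next
    case 2 then show ?thesis using real conv_ioc[OF \<mu>s \<mu> vc nm 2] by (simp add: sm_F_def)
  next
    case 3 then show ?thesis using real tendsto_minus[OF conv_ioc[OF \<mu>s \<mu> vc nm 3]] by (simp add: sm_F_def)
  qed
next
  case PInf
  then show ?thesis using tendsto_minus[OF conv_ioi[OF \<mu>s \<mu> vc nm pi]] by (simp add: sm_F_def)
next
  case MInf
  then show ?thesis using conv_iic[OF \<mu>s \<mu> vc nm mi] by (simp add: sm_F_def)
qed

lemma var_nonneg:
  assumes "is_smeasure \<mu>" shows "0 \<le> sm_var \<mu> A"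
  using var_ge[OF assms, of "{}" A] by (simp add: sm_val_def)

lemma ev_bound:
  assumes \<mu>s: "\<And>n. is_smeasure (\<mu>s n)" and nm: "\<And>x. no_mass_at \<mu>s x"
  shows "\<exists>V. V \<ge> 0 \<and> eventually (\<lambda>n. \<forall>B\<in>sets borel. B \<subseteq> {a..b} \<longrightarrow> \<bar>sm_val (\<mu>s n) B\<bar> \<le> V) sequentially"
proof -
  have "\<forall>x. \<exists>N. open N \<and> x \<in> N \<and> eventually (\<lambda>n. sm_var (\<mu>s n) N < 1) sequentially"
    using nm_ev[OF nm] by auto
  then obtain Nf where Nf: "\<forall>x. open (Nf x) \<and> x \<in> Nf x \<and> eventually (\<lambda>n. sm_var (\<mu>s n) (Nf x) < 1) sequentially"
    by metis
  obtain C' where C': "C' \<subseteq> {a..b}" "finite C'" "{a..b} \<subseteq> (\<Union>c\<in>C'. Nf c)"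
    by (rule compactE_image[OF compact_Icc, of "{a..b}" Nf]) (use Nf in auto)
  have ev: "eventually (\<lambda>n. \<forall>c\<in>C'. sm_var (\<mu>s n) (Nf c) < 1) sequentially"
    by (subst eventually_ball_finite_distrib[OF C'(2)]) (use Nf in auto)
  show ?thesis
  proof (intro exI[of _ "real (card C')"] conjI)
    show "0 \<le> real (card C')" by simp
    show "eventually (\<lambda>n. \<forall>B\<in>sets borel. B \<subseteq> {a..b} \<longrightarrow> \<bar>sm_val (\<mu>s n) B\<bar> \<le> real (card C')) sequentially"
      using ev
    proof eventually_elim
      case (elim n)
      show ?case
      proof (intro ballI impI)
        fix B assume B: "B \<in> sets borel" "B \<subseteq> {a..b}"
        have "\<bar>sm_val (\<mu>s n) B\<bar> \<le> (\<Sum>N\<in>Nf ` C'. sm_var (\<mu>s n) N)"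
          by (rule fin_cover[OF \<mu>s]) (use C' Nf B in auto)
        also have "\<dots> \<le> (\<Sum>c\<in>C'. sm_var (\<mu>s n) (Nf c))"
          using sum_image_le[OF C'(2), of "sm_var (\<mu>s n)" Nf] var_nonneg[OF \<mu>s] by (simp add: o_def)
        also have "\<dots> \<le> real (card C') * 1"
          by (rule sum_bounded_above) (use elim in auto)
        finally show "\<bar>sm_val (\<mu>s n) B\<bar> \<le> real (card C')" by simp
      qed
    qed
  qed
qed

lemma cell_iff:
  fixes h c x :: real and i :: int
  assumes h: "h > 0"
  shows "(c + of_int i * h < x \<and> x \<le> c + of_int (i + 1) * h) \<longleftrightarrow> i = \<lceil>(x - c) / h\<rceil> - 1"
proof -
  have "i = \<lceil>(x - c) / h\<rceil> - 1 \<longleftrightarrow> \<lceil>(x - c) / h\<rceil> = i + 1" by auto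
  also have "\<dots> \<longleftrightarrow> of_int i < (x - c) / h \<and> (x - c) / h \<le> of_int i + 1"
    by (simp add: ceiling_eq_iff)
  also have "\<dots> \<longleftrightarrow> (c + of_int i * h < x \<and> x \<le> c + of_int (i + 1) * h)"
    using h by (simp add: less_divide_eq divide_le_eq algebra_simps)
  finally show ?thesis by simp
qed

lemma sm_int_step:
  fixes a :: "int \<Rightarrow> real" and S :: "int \<Rightarrow> real set"
  assumes \<mu>: "is_smeasure \<mu>" and fin: "finite Ix" and Sb: "\<And>i. S i \<in> sets borel"
  shows "sm_int \<mu> (\<lambda>x. \<Sum>i\<in>Ix. a i * indicator (S i) x) = (\<Sum>i\<in>Ix. a i * sm_val \<mu> (S i))"
proof -
  note s = smD[OF \<mu>]
  have "integral\<^sup>L M (\<lambda>x. \<Sum>i\<in>Ix. a i * indicator (S i) x) = (\<Sum>i\<in>Ix. a i * measure M (S i))"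
    if M: "M = fst \<mu> \<or> M = snd \<mu>" for M
  proof -
    have int: "integrable M (\<lambda>x. a i * indicator (S i) x)" for i
    proof -
      have m: "(\<lambda>x. a i * indicator (S i) x) \<in> borel_measurable borel" using Sb[of i] by measurable
      have b: "\<bar>a i * indicator (S i) x\<bar> \<le> \<bar>a i\<bar>" for x by (simp add: indicator_def)
      show ?thesis using sm_integrable[OF \<mu> m b] M by blast
    qed
    have "integral\<^sup>L M (\<lambda>x. \<Sum>i\<in>Ix. a i * indicator (S i) x) = (\<Sum>i\<in>Ix. integral\<^sup>L M (\<lambda>x. a i * indicator (S i) x))"
      using Bochner_Integration.integral_sum[where I=Ix and M=M and f="\<lambda>i x. a i * indicator (S i) x"] int by auto
    also have "\<dots> = (\<Sum>i\<in>Ix. a i * measure M (S i))"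
    proof -
      have "space M = UNIV" using M s by auto
      then show ?thesis by simp
    qed
    finally show ?thesis .
  qed
  then show ?thesis unfolding sm_int_def sm_val_def
    by (simp add: sum_subtractf right_diff_distrib)
qed

lemma a_to_b:
  assumes \<mu>s: "\<And>n. is_smeasure (\<mu>s n)" and \<mu>: "is_smeasure \<mu>"
    and nm: "\<And>x. no_mass_at \<mu>s x"
    and Fc: "\<forall>x. continuity_point \<mu> x \<longrightarrow> (\<lambda>n. sm_F \<alpha> (\<mu>s n) x) \<longlonglongrightarrow> sm_F \<alpha> \<mu> x"
  shows "vague_conv \<mu>s \<mu>"
  unfolding vague_conv_def
proof (intro allI impI)
  fix f :: "real \<Rightarrow> real"
  assume "continuous_on UNIV f \<and> (\<exists>K. compact K \<and> (\<forall>x. x \<notin> K \<longrightarrow> f x = 0))"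
  then obtain K where fc: "continuous_on UNIV f" and K: "compact K" and fK: "\<And>x. x \<notin> K \<Longrightarrow> f x = 0"
    by blast
  obtain R0 where R0: "\<forall>x\<in>K. \<bar>x\<bar> \<le> R0" using compact_imp_bounded[OF K] bounded_real by blast
  define R where "R = max R0 1"
  have R: "R > 0" unfolding R_def by simp
  have fR: "f x = 0" if "\<bar>x\<bar> > R" for x
  proof -
    have "x \<notin> K" using R0 that unfolding R_def by force
    then show ?thesis by (rule fK)
  qed
  have fm: "f \<in> borel_measurable borel" by (rule borel_measurable_continuous_onI[OF fc])
  obtain Bf where Bf: "\<And>x. \<bar>f x\<bar> \<le> Bf"
  proof -
    have "compact (f ` cball 0 R)"
      by (rule compact_continuous_image[OF continuous_on_subset[OF fc] compact_cball]) auto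
    then obtain b where b: "\<forall>y\<in>f ` cball 0 R. \<bar>y\<bar> \<le> b" using compact_imp_bounded bounded_real by metis
    have "\<bar>f x\<bar> \<le> max b 0" for x
    proof (cases "\<bar>x\<bar> \<le> R")
      case True
      then have "x \<in> cball 0 R" by (simp add: dist_real_def)
      then show ?thesis using b by force
    next
      case False then show ?thesis using fR by simp
    qed
    then show ?thesis using that by blast
  qed
  obtain V where V: "V \<ge> 0"
    and evV: "eventually (\<lambda>n. \<forall>B\<in>sets borel. B \<subseteq> {-R-2..R+2} \<longrightarrow> \<bar>sm_val (\<mu>s n) B\<bar> \<le> V) sequentially"
    using ev_bound[OF \<mu>s nm] by blast
  note s = smD[OF \<mu>]
  define W where "W = measure (fst \<mu>) UNIV + measure (snd \<mu>) UNIV"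
  have W: "\<bar>sm_val \<mu> B\<bar> \<le> W" for B
  proof -
    have "measure (fst \<mu>) B \<le> measure (fst \<mu>) UNIV" "measure (snd \<mu>) B \<le> measure (snd \<mu>) UNIV"
      using finite_measure.bounded_measure[OF s(1), of B] finite_measure.bounded_measure[OF s(2), of B] s
      by auto
    then show ?thesis unfolding W_def sm_val_def
      using measure_nonneg[of "fst \<mu>" B] measure_nonneg[of "snd \<mu>" B] by linarith
  qed
  have W0: "W \<ge> 0" unfolding W_def by simp
  show "(\<lambda>n. sm_int (\<mu>s n) f) \<longlonglongrightarrow> sm_int \<mu> f"
  proof (rule LIMSEQ_I)
    fix r :: real assume r: "r > 0"
    define \<epsilon> where "\<epsilon> = r / (4 * (V + W + 1))"
    have \<epsilon>: "\<epsilon> > 0" unfolding \<epsilon>_def using r V W0 by simp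
    have \<epsilon>b: "2 * \<epsilon> * V + 2 * \<epsilon> * W \<le> r / 2"
    proof -
      have "2 * \<epsilon> * V + 2 * \<epsilon> * W = 2 * \<epsilon> * (V + W)" by (simp add: algebra_simps)
      also have "\<dots> \<le> 2 * \<epsilon> * (V + W + 1)" using \<epsilon> by simp
      also have "\<dots> = r / 2" unfolding \<epsilon>_def using V W0 by (simp add: field_simps)
      finally show ?thesis .
    qed
    have uc: "uniformly_continuous_on (cball 0 (R + 2)) f"
      by (rule compact_uniformly_continuous[OF continuous_on_subset[OF fc] compact_cball]) auto
    obtain \<delta>0 where \<delta>0: "\<delta>0 > 0"
      and \<delta>0f: "\<forall>x\<in>cball 0 (R + 2). \<forall>x'\<in>cball 0 (R + 2). dist x' x < \<delta>0 \<longrightarrow> dist (f x') (f x) < \<epsilon>"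
      using uc \<epsilon> unfolding uniformly_continuous_on_def by metis
    define h where "h = min \<delta>0 1 / 2"
    have h: "h > 0" "h \<le> 1/2" "h < \<delta>0" unfolding h_def using \<delta>0 by auto
    have fclose: "\<bar>f x - f y\<bar> < \<epsilon>" if xy: "\<bar>x - y\<bar> \<le> h" for x y
    proof (cases "\<bar>x\<bar> \<le> R + 2 \<and> \<bar>y\<bar> \<le> R + 2")
      case True
      then have "x \<in> cball 0 (R + 2)" "y \<in> cball 0 (R + 2)" by (auto simp: dist_real_def)
      moreover have "dist x y < \<delta>0" using xy h by (simp add: dist_real_def)
      ultimately show ?thesis using \<delta>0f by (force simp: dist_real_def)
    next
      case False
      then have "\<bar>x\<bar> > R \<and> \<bar>y\<bar> > R" using xy h by auto
      then show ?thesis using fR \<epsilon> by simp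
    qed
    have cD: "countable {x. sm_val \<mu> {x} \<noteq> 0}"
    proof (rule countable_subset)
      show "{x. sm_val \<mu> {x} \<noteq> 0} \<subseteq> {x. measure (fst \<mu>) {x} \<noteq> 0} \<union> {x. measure (snd \<mu>) {x} \<noteq> 0}"
        by (auto simp: sm_val_def)
      show "countable ({x. measure (fst \<mu>) {x} \<noteq> 0} \<union> {x. measure (snd \<mu>) {x} \<noteq> 0})"
        using finite_measure.countable_support[OF s(1)] finite_measure.countable_support[OF s(2)] by simp
    qed
    define E where "E = (\<Union>i::int. (\<lambda>x. x - real_of_int i * h) ` {x. sm_val \<mu> {x} \<noteq> 0})"
    have cE: "countable E" unfolding E_def using cD by (intro countable_UN) auto
    obtain c where c: "c \<in> {0<..<h}" "c \<notin> E"
      using open_minus_countable[OF cE, of "{0<..<h}"] h by auto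
    define t where "t i = c + real_of_int i * h" for i :: int
    have tcont: "continuity_point \<mu> (t i)" for i
    proof (rule ccontr)
      assume "\<not> continuity_point \<mu> (t i)"
      then have "t i \<in> {x. sm_val \<mu> {x} \<noteq> 0}" unfolding continuity_point_def by simp
      then have "t i - real_of_int i * h \<in> E" unfolding E_def by blast
      then show False using c unfolding t_def by simp
    qed
    have tmono: "t i \<le> t i'" if "i \<le> i'" for i i'
      unfolding t_def using that h by (simp add: mult_right_mono)
    have tstep: "t (i + 1) = t i + h" for i unfolding t_def by (simp add: algebra_simps)
    define M :: int where "M = \<lceil>R / h\<rceil> + 1"
    have M1: "real_of_int M * h \<ge> R + h"
    proof -
      have "R = R / h * h" using h by simp
      also have "\<dots> \<le> real_of_int \<lceil>R / h\<rceil> * h" using h by (intro mult_right_mono) auto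
      finally show ?thesis unfolding M_def by (simp add: algebra_simps)
    qed
    have M2: "real_of_int M * h < R + 2 * h"
    proof -
      have "real_of_int \<lceil>R / h\<rceil> < R / h + 1" by linarith
      then have "real_of_int \<lceil>R / h\<rceil> * h < (R / h + 1) * h" using h by (intro mult_strict_right_mono) auto
      also have "\<dots> = R + h" using h by (simp add: algebra_simps)
      finally show ?thesis unfolding M_def by (simp add: algebra_simps)
    qed
    have tM: "t (-M) < -R" "t (-M) > -R - 2" "t M > R" "t M < R + 2"
      using M1 M2 c h unfolding t_def by auto
    define Ix where "Ix = {-M..<M}"
    define sf where "sf x = (\<Sum>i\<in>Ix. f (t (i + 1)) * indicator {t i<..t (i + 1)} x)" for x
    define A where "A = {t (-M)<..t M}"
    define j where "j x = \<lceil>(x - c) / h\<rceil> - 1" for x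
    have jcell: "t (j x) < x \<and> x \<le> t (j x + 1)" for x
      using cell_iff[OF h(1), of c "j x" x] unfolding t_def j_def by simp
    have sx: "sf x = (if j x \<in> Ix then f (t (j x + 1)) else 0)" for x
    proof -
      have "sf x = (\<Sum>i\<in>Ix. if i = j x then f (t (i + 1)) else 0)"
        unfolding sf_def
      proof (rule sum.cong)
        fix i assume "i \<in> Ix"
        have "(t i < x \<and> x \<le> t (i + 1)) \<longleftrightarrow> i = j x"
          using cell_iff[OF h(1), of c i x] unfolding t_def j_def by simp
        then show "f (t (i + 1)) * indicator {t i<..t (i + 1)} x = (if i = j x then f (t (i + 1)) else 0)"
          by (auto simp: indicator_def)
      qed simp
      also have "\<dots> = (if j x \<in> Ix then f (t (j x + 1)) else 0)"
        by (simp add: Ix_def)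
      finally show ?thesis .
    qed
    have jA: "j x \<in> Ix \<longleftrightarrow> x \<in> A" for x
    proof
      assume "j x \<in> Ix"
      then have "-M \<le> j x" "j x + 1 \<le> M" unfolding Ix_def by auto
      then show "x \<in> A" using jcell[of x] tmono[of "-M" "j x"] tmono[of "j x + 1" M] unfolding A_def by auto
    next
      assume xA: "x \<in> A"
      show "j x \<in> Ix"
      proof (rule ccontr)
        assume "j x \<notin> Ix"
        then have "j x + 1 \<le> -M \<or> M \<le> j x" unfolding Ix_def by auto
        then show False
        proof
          assume "j x + 1 \<le> -M"
          then show False using jcell[of x] tmono[of "j x + 1" "-M"] xA unfolding A_def by auto
        next
          assume "M \<le> j x"
          then show False using jcell[of x] tmono[of M "j x"] xA unfolding A_def by auto
        qed
      qed
    qed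
    have fsA: "f x - sf x = 0" if "x \<notin> A" for x
    proof -
      have "sf x = 0" using sx[of x] jA[of x] that by simp
      moreover have "\<bar>x\<bar> > R" using that tM unfolding A_def by auto
      ultimately show ?thesis using fR by simp
    qed
    have fsb: "\<bar>f x - sf x\<bar> \<le> \<epsilon>" for x
    proof (cases "x \<in> A")
      case True
      then have "sf x = f (t (j x + 1))" using sx[of x] jA[of x] by simp
      moreover have "\<bar>x - t (j x + 1)\<bar> \<le> h" using jcell[of x] tstep[of "j x"] by auto
      ultimately show ?thesis using fclose[of x "t (j x + 1)"] by simp
    next
      case False then show ?thesis using fsA \<epsilon> by simp
    qed
    have Asub: "A \<subseteq> {-R-2..R+2}" using tM unfolding A_def by auto
    have sfm: "sf \<in> borel_measurable borel" unfolding sf_def by measurable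
    have sfb: "\<bar>sf x\<bar> \<le> Bf" for x using sx[of x] Bf[of "t (j x + 1)"] Bf[of 0] by (auto simp: abs_le_iff)
    have fsm: "(\<lambda>x. f x - sf x) \<in> borel_measurable borel" using fm sfm by measurable
    have intf: "sm_int \<nu> f - sm_int \<nu> sf = sm_int \<nu> (\<lambda>x. f x - sf x)" if "is_smeasure \<nu>" for \<nu>
      using sm_int_diff[OF that fm Bf sfm sfb] by simp
    have ints: "sm_int \<nu> sf = (\<Sum>i\<in>Ix. f (t (i + 1)) * (sm_F \<alpha> \<nu> (t (i + 1)) - sm_F \<alpha> \<nu> (t i)))"
      if \<nu>: "is_smeasure \<nu>" for \<nu>
    proof -
      have "sm_int \<nu> sf = (\<Sum>i\<in>Ix. f (t (i + 1)) * sm_val \<nu> {t i<..t (i + 1)})"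
        unfolding sf_def by (rule sm_int_step[OF \<nu>]) (auto simp: Ix_def)
      also have "\<dots> = (\<Sum>i\<in>Ix. f (t (i + 1)) * (sm_F \<alpha> \<nu> (t (i + 1)) - sm_F \<alpha> \<nu> (t i)))"
        using F_diff[OF \<nu>] tmono by simp
      finally show ?thesis .
    qed
    have sconv: "(\<lambda>n. sm_int (\<mu>s n) sf) \<longlonglongrightarrow> sm_int \<mu> sf"
      unfolding ints[OF \<mu>s] ints[OF \<mu>]
      by (intro tendsto_sum tendsto_mult tendsto_const tendsto_diff Fc[rule_format] tcont)
    obtain n1 where n1: "\<forall>n\<ge>n1. norm (sm_int (\<mu>s n) sf - sm_int \<mu> sf) < r / 4"
      using LIMSEQ_D[OF sconv, of "r/4"] r by auto
    obtain n2 where n2: "\<forall>n\<ge>n2. \<forall>B\<in>sets borel. B \<subseteq> {-R-2..R+2} \<longrightarrow> \<bar>sm_val (\<mu>s n) B\<bar> \<le> V"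
      using evV unfolding eventually_sequentially by blast
    have bmu: "\<bar>sm_int \<mu> (\<lambda>x. f x - sf x)\<bar> \<le> 2 * \<epsilon> * W"
      by (rule signed_bound[OF \<mu> fsm \<epsilon> fsb, where A=A]) (use fsA W in auto)
    show "\<exists>no. \<forall>n\<ge>no. norm (sm_int (\<mu>s n) f - sm_int \<mu> f) < r"
    proof (intro exI allI impI)
      fix n assume n: "n \<ge> max n1 n2"
      have bn: "\<bar>sm_int (\<mu>s n) (\<lambda>x. f x - sf x)\<bar> \<le> 2 * \<epsilon> * V"
      proof (rule signed_bound[OF \<mu>s fsm \<epsilon> fsb, where A=A])
        show "x \<notin> A \<Longrightarrow> f x - sf x = 0" for x by (rule fsA)
        show "\<bar>sm_val (\<mu>s n) B\<bar> \<le> V" if "B \<in> sets borel" "B \<subseteq> A" for B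
          using n2 n that Asub by force
      qed
      have c1: "\<bar>sm_int (\<mu>s n) sf - sm_int \<mu> sf\<bar> < r / 4" using n1 n by force
      have "sm_int (\<mu>s n) f - sm_int \<mu> f
          = sm_int (\<mu>s n) (\<lambda>x. f x - sf x) + (sm_int (\<mu>s n) sf - sm_int \<mu> sf) - sm_int \<mu> (\<lambda>x. f x - sf x)"
        using intf[OF \<mu>s[of n]] intf[OF \<mu>] by simp
      then have "\<bar>sm_int (\<mu>s n) f - sm_int \<mu> f\<bar> \<le> \<bar>sm_int (\<mu>s n) (\<lambda>x. f x - sf x)\<bar> + \<bar>sm_int (\<mu>s n) sf - sm_int \<mu> sf\<bar> + \<bar>sm_int \<mu> (\<lambda>x. f x - sf x)\<bar>"
        by (simp add: tri3)
      then show "norm (sm_int (\<mu>s n) f - sm_int \<mu> f) < r"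
        using bn c1 bmu \<epsilon>b r unfolding real_norm_def by linarith
    qed
  qed
qed

theorem theorem3p11:
  fixes \<mu>s :: "nat \<Rightarrow> smeasure" and \<mu> :: smeasure and \<alpha> :: ereal
  assumes "\<And>n. is_smeasure (\<mu>s n)" and "is_smeasure \<mu>"
    and "\<And>x. no_mass_at \<mu>s x"
    and "\<alpha> = -\<infinity> \<Longrightarrow> no_mass_at_minf \<mu>s"
    and "\<alpha> = \<infinity> \<Longrightarrow> no_mass_at_pinf \<mu>s"
  shows "(\<forall>x. continuity_point \<mu> x \<longrightarrow> (\<lambda>n. sm_F \<alpha> (\<mu>s n) x) \<longlonglongrightarrow> sm_F \<alpha> \<mu> x)
         \<longleftrightarrow> vague_conv \<mu>s \<mu>"
proof
  assume "\<forall>x. continuity_point \<mu> x \<longrightarrow> (\<lambda>n. sm_F \<alpha> (\<mu>s n) x) \<longlonglongrightarrow> sm_F \<alpha> \<mu> x"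
  then show "vague_conv \<mu>s \<mu>" by (rule a_to_b[OF assms(1,2,3)])
next
  assume vc: "vague_conv \<mu>s \<mu>"
  show "\<forall>x. continuity_point \<mu> x \<longrightarrow> (\<lambda>n. sm_F \<alpha> (\<mu>s n) x) \<longlonglongrightarrow> sm_F \<alpha> \<mu> x"
    using b_to_a[OF assms vc] by blast
qed

end
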